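(* Let $J=\{m_1,\dots,m_d\}\subset\mathbb{Z}_n$ be a $d$-element subset that generates $\mathbb{Z}_n$ and is exceptional. Then there exist $n$-th roots of unity $z_{d+1},\dots,z_{2d}$ such that $$z=(\omega^{m_1},\dots,\omega^{m_d},z_{d+1},\dots,z_{2d})\in V$$ and $z$ is an exceptional point, i.e. $(z_{d+1},\dots,z_{2d})$ is not a permutation of $(\omega^{m_1},\dots,\omega^{m_d})$.
   Context: Let $\omega=e^{2\pi i/n}$. For a $d$-element subset $J\subset\mathbb{Z}_n$, the cyclic harmonic frame $\Phi_J$ is the sequence $(v_k)_{k\in\mathbb{Z}_n}$ with $v_k=(\omega^{jk})_{j\in J}\in\mathbb{C}^J\cong\mathbb{C}^d$. Two finite sequences $(v_k)_{k\in I}$, $(w_k)_{k\in I'}$ in $\mathbb{C}^d$ are unitarily equivalent if there is a unitary $U$ and a bijection $\sigma:I\to I'$ with $v_k=Uw_{\sigma(k)}$ for all $k$. Two $d$-element subsets $J,K\subset\mathbb{Z}_n$ are multiplicatively equivalent if $K=aJ=\{aj:j\in J\}$ for some unit $a\in\mathbb{Z}_n^*$. A $d$-element subset $J\subset\mathbb{Z}_n$ is exceptional if there is a $d$-element subset $K\subset\mathbb{Z}_n$, not multiplicatively equivalent to $J$, such that $\Phi_J$ and $\Phi_K$ are unitarily equivalent. Let $V=\{z\in\mathbb{C}^{2d}:\sum_{j=1}^d z_j-\sum_{j=d+1}^{2d}z_j=0\}$. A point $z\in V$ whose coordinates are roots of unity is called exceptional if $(z_{d+1},\dots,z_{2d})$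 is not a permutation of $(z_1,\dots,z_d)$. *)

theory Defs
  imports Complex_Main "HOL-Combinatorics.Permutations"
begin

text \<open>Z_n is represented by the residues {..<n} (as naturals); n > 0 throughout.\<close>

definition omega :: "nat \<Rightarrow> complex" where
  "omega n = cis (2 * pi / real n)"

text \<open>Vectors in C^J are functions nat => complex vanishing outside J.\<close>
definition vecs :: "nat set \<Rightarrow> (nat \<Rightarrow> complex) set" where
  "vecs A = {f. \<forall>j. j \<notin> A \<longrightarrow> f j = 0}"

definition cinner :: "nat set \<Rightarrow> (nat \<Rightarrow> complex) \<Rightarrow> (nat \<Rightarrow> complex) \<Rightarrow> complex" where
  "cinner A f g = (\<Sum>j\<in>A. f j * cnj (g j))"

definition frame_vec :: "nat \<Rightarrow> nat set \<Rightarrow> nat \<Rightarrow> (nat \<Rightarrow> complex)" where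
  "frame_vec n J k = (\<lambda>j. if j \<in> J then omega n ^ (j * k) else 0)"

definition unitary_between :: "nat set \<Rightarrow> nat set \<Rightarrow> ((nat \<Rightarrow> complex) \<Rightarrow> (nat \<Rightarrow> complex)) \<Rightarrow> bool" where
  "unitary_between K J U \<longleftrightarrow>
     bij_betw U (vecs K) (vecs J) \<and>
     (\<forall>f\<in>vecs K. \<forall>g\<in>vecs K. \<forall>a b. U (\<lambda>j. a * f j + b * g j) = (\<lambda>j. a * U f j + b * U g j)) \<and>
     (\<forall>f\<in>vecs K. \<forall>g\<in>vecs K. cinner J (U f) (U g) = cinner K f g)"

definition frames_unit_equiv :: "nat \<Rightarrow> nat set \<Rightarrow> nat set \<Rightarrow> bool" where
  "frames_unit_equiv n J K \<longleftrightarrow>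
     (\<exists>U \<sigma>. unitary_between K J U \<and> bij_betw \<sigma> {..<n} {..<n} \<and>
        (\<forall>k<n. frame_vec n J k = U (frame_vec n K (\<sigma> k))))"

definition mult_equiv :: "nat \<Rightarrow> nat set \<Rightarrow> nat set \<Rightarrow> bool" where
  "mult_equiv n J K \<longleftrightarrow> (\<exists>a<n. coprime a n \<and> K = (\<lambda>j. (a * j) mod n) ` J)"

definition exceptional_set :: "nat \<Rightarrow> nat \<Rightarrow> nat set \<Rightarrow> bool" where
  "exceptional_set n d J \<longleftrightarrow> J \<subseteq> {..<n} \<and> card J = d \<and>
     (\<exists>K. K \<subseteq> {..<n} \<and> card K = d \<and> \<not> mult_equiv n J K \<and> frames_unit_equiv n J K)"

definition generates_Zn :: "nat \<Rightarrow> nat set \<Rightarrow> bool" where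
  "generates_Zn n J \<longleftrightarrow> (\<forall>x<n. \<exists>c::nat \<Rightarrow> nat. (\<Sum>j\<in>J. c j * j) mod n = x)"

text \<open>Points of C^{2d} are functions nat => complex, coordinates z_1..z_{2d} being z 0 .. z (2d-1).\<close>
definition in_V :: "nat \<Rightarrow> (nat \<Rightarrow> complex) \<Rightarrow> bool" where
  "in_V d z \<longleftrightarrow> (\<Sum>i<d. z i) - (\<Sum>i\<in>{d..<2*d}. z i) = 0"

definition exceptional_point :: "nat \<Rightarrow> (nat \<Rightarrow> complex) \<Rightarrow> bool" where
  "exceptional_point d z \<longleftrightarrow> in_V d z \<and>
     (\<forall>i<2*d. \<exists>m>0. z i ^ m = 1) \<and>
     \<not> (\<exists>\<pi>. \<pi> permutes {..<d} \<and> (\<forall>i<d. z (d + i) = z (\<pi> i)))"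

end

theory Submission
  imports Defs
begin

lemma omega_pow_n: "n > 0 \<Longrightarrow> omega n ^ n = 1"
  by (simp add: omega_def DeMoivre)

lemma omega_pow_mod: "n > 0 \<Longrightarrow> omega n ^ a = omega n ^ (a mod n)"
proof -
  assume n: "n > 0"
  have "omega n ^ a = omega n ^ (n * (a div n) + a mod n)" by simp
  also have "\<dots> = (omega n ^ n) ^ (a div n) * omega n ^ (a mod n)"
    by (simp only: power_add power_mult)
  finally show ?thesis using omega_pow_n[OF n] by simp
qed

lemma omega_pow_cong: "n > 0 \<Longrightarrow> a mod n = b mod n \<Longrightarrow> omega n ^ a = omega n ^ b"
  by (metis omega_pow_mod)

lemma omega_pow_one: "n > 0 \<Longrightarrow> omega n ^ a = 1 \<Longrightarrow> a mod n = 0"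
proof -
  assume n: "n > 0" and h: "omega n ^ a = 1"
  have "omega n ^ (a mod n) = 1" using h omega_pow_mod[OF n, of a] by simp
  hence "cis (real (a mod n) * (2 * pi / real n)) = 1" by (simp add: omega_def DeMoivre)
  hence "cos (real (a mod n) * (2 * pi / real n)) = 1" by (metis cis.sel(1) one_complex.sel(1))
  then obtain x :: int where x: "real (a mod n) * (2 * pi / real n) = real_of_int x * 2 * pi"
    using cos_one_2pi_int by blast
  hence "real (a mod n) = real_of_int x * real n" using n by (simp add: field_simps)
  hence e: "int (a mod n) = x * int n" by (metis of_int_eq_iff of_int_mult of_int_of_nat_eq)
  have lt: "int (a mod n) < int n" using n by simp
  have ge: "int (a mod n) \<ge> 0" by simp
  have "x = 0"
  proof (rule ccontr)
    assume "x \<noteq> 0"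
    then consider "x \<ge> 1" | "x \<le> -1" by linarith
    thus False
    proof cases
      case 1 hence "x * int n \<ge> int n" using n by (simp add: mult_le_cancel_right1)
      thus False using e lt by linarith
    next
      case 2 hence "x * int n \<le> - int n" using n
        by (metis mult_minus_left mult_right_mono of_nat_0_le_iff mult_1)
      thus False using e ge n by linarith
    qed
  qed
  thus ?thesis using e by simp
qed

lemma omega_pow_eq: "n > 0 \<Longrightarrow> omega n ^ a = omega n ^ b \<Longrightarrow> a mod n = b mod n"
proof -
  assume n: "n > 0" and h: "omega n ^ a = omega n ^ b"
  have nz: "omega n \<noteq> 0" by (simp add: omega_def)
  show ?thesis
  proof (cases "a \<le> b")
    case True
    have "omega n ^ b = omega n ^ a * omega n ^ (b - a)" using True
      by (metis le_add_diff_inverse power_add)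
    hence "omega n ^ (b - a) = 1" using h nz by simp
    hence "(b - a) mod n = 0" using omega_pow_one[OF n] by blast
    thus ?thesis using True by (metis le_add_diff_inverse mod_add_right_eq add_0_right)
  next
    case False
    have "omega n ^ a = omega n ^ b * omega n ^ (a - b)" using False
      by (metis le_add_diff_inverse power_add nat_le_linear)
    hence "omega n ^ (a - b) = 1" using h nz by simp
    hence "(a - b) mod n = 0" using omega_pow_one[OF n] by blast
    thus ?thesis using False
      by (metis le_add_diff_inverse mod_add_right_eq add_0_right nat_le_linear)
  qed
qed

lemma cnj_omega: "n > 0 \<Longrightarrow> cnj (omega n) = omega n ^ (n - 1)"
proof -
  assume n: "n > 0"
  have nz: "omega n \<noteq> 0" by (simp add: omega_def)
  have a: "cnj (omega n) * omega n = 1" by (simp add: omega_def cis_cnj cis_mult)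
  have b: "omega n ^ (n - 1) * omega n = 1" using omega_pow_n[OF n] n
    by (metis Suc_diff_1 power_Suc2)
  show ?thesis using a b nz by (metis mult_right_cancel)
qed

lemma cnj_omega_pow: "n > 0 \<Longrightarrow> cnj (omega n ^ a) = omega n ^ ((n - 1) * a)"
  by (simp add: cnj_omega power_mult)

lemma omega_root: "n > 0 \<Longrightarrow> (omega n ^ x) ^ n = 1"
  by (metis power_mult mult.commute omega_pow_n power_one)

lemma frame_vec_in: "frame_vec n J k \<in> vecs J"
  by (simp add: frame_vec_def vecs_def)

lemma inv_coprime: "(a * c) mod n = 1 mod (n::nat) \<Longrightarrow> coprime a n"
proof (cases "n = 1")
  case True thus ?thesis by simp
next
  case False
  assume h: "(a * c) mod n = 1 mod n"
  show ?thesis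
  proof (rule coprimeI)
    fix g assume "g dvd a" "g dvd n"
    hence "g dvd (a * c) mod n" by (simp add: dvd_mod)
    hence "g dvd 1 mod n" using h by simp
    moreover have "1 mod n = 1 \<or> n = 0" using False by (cases n) auto
    ultimately have "g dvd 1" using \<open>g dvd n\<close> by auto
    thus "is_unit g" by simp
  qed
qed

theorem lemma4p2:
  fixes n d :: nat and J :: "nat set" and m :: "nat \<Rightarrow> nat"
  assumes "n > 0"
    and "exceptional_set n d J"
    and "generates_Zn n J"
    and "bij_betw m {..<d} J"
  shows "\<exists>z :: nat \<Rightarrow> complex.
           (\<forall>i<d. z i = omega n ^ m i) \<and>
           (\<forall>i<d. z (d + i) ^ n = 1) \<and>
           in_V d z \<and> exceptional_point d z"
proof -
  note n = assms(1)
  note mb = assms(4)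
  obtain K where KS: "K \<subseteq> {..<n}" and Kc: "card K = d" and nme: "\<not> mult_equiv n J K"
    and fe: "frames_unit_equiv n J K" and JS: "J \<subseteq> {..<n}"
    using assms(2) unfolding exceptional_set_def by blast
  obtain U \<sigma> where Uu: "unitary_between K J U" and sb: "bij_betw \<sigma> {..<n} {..<n}"
    and fr: "\<forall>k<n. frame_vec n J k = U (frame_vec n K (\<sigma> k))"
    using fe unfolding frames_unit_equiv_def by blast
  define k1 where "k1 = 1 mod n"
  have k1n: "k1 < n" using n by (simp add: k1_def)
  define c where "c = \<sigma> k1 + (n - 1) * \<sigma> 0"
  have finJ: "finite J" using JS finite_subset by blast
  have finK: "finite K" using KS finite_subset by blast
  have gram: "cinner J (frame_vec n J k1) (frame_vec n J 0)
      = cinner K (frame_vec n K (\<sigma> k1)) (frame_vec n K (\<sigma> 0))"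
    using Uu fr k1n n frame_vec_in unfolding unitary_between_def by metis
  have L: "cinner J (frame_vec n J k1) (frame_vec n J 0) = (\<Sum>j\<in>J. omega n ^ j)"
    unfolding cinner_def frame_vec_def
  proof (rule sum.cong)
    fix j assume "j \<in> J"
    have "omega n ^ (j * k1) = omega n ^ j"
    proof (rule omega_pow_cong[OF n])
      have "j * (1 mod n) mod n = (j * 1) mod n" by (rule mod_mult_right_eq)
      thus "j * k1 mod n = j mod n" unfolding k1_def by simp
    qed
    thus "(if j \<in> J then omega n ^ (j * k1) else 0) * cnj (if j \<in> J then omega n ^ (j * 0) else 0) = omega n ^ j"
      using \<open>j \<in> J\<close> by simp
  qed simp
  have R: "cinner K (frame_vec n K (\<sigma> k1)) (frame_vec n K (\<sigma> 0)) = (\<Sum>j\<in>K. omega n ^ (c * j))"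
    unfolding cinner_def frame_vec_def
  proof (rule sum.cong)
    fix j assume "j \<in> K"
    have "omega n ^ (j * \<sigma> k1) * omega n ^ ((n - 1) * (j * \<sigma> 0)) = omega n ^ (c * j)"
      unfolding c_def power_add[symmetric] by (simp add: algebra_simps)
    thus "(if j \<in> K then omega n ^ (j * \<sigma> k1) else 0) * cnj (if j \<in> K then omega n ^ (j * \<sigma> 0) else 0) = omega n ^ (c * j)"
      using \<open>j \<in> K\<close> cnj_omega_pow[OF n, of "j * \<sigma> 0"] by (simp only: if_True)
  qed simp
  have eqs: "(\<Sum>j\<in>J. omega n ^ j) = (\<Sum>j\<in>K. omega n ^ (c * j))"
    using gram L R by simp
  obtain kk where kkb: "bij_betw kk {..<d} K"
    using ex_bij_betw_nat_finite[OF finK] Kc by (metis lessThan_atLeast0)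
  define z where "z i = (if i < d then omega n ^ m i else omega n ^ (c * kk (i - d)))" for i
  have z1: "\<forall>i<d. z i = omega n ^ m i" by (simp add: z_def)
  have z2: "\<And>i. z i ^ n = 1"
    using n by (simp add: z_def omega_root)
  have s1: "(\<Sum>i<d. z i) = (\<Sum>j\<in>J. omega n ^ j)"
    using sum.reindex_bij_betw[OF mb, of "\<lambda>j. omega n ^ j"] by (simp add: z_def)
  have "(\<Sum>i\<in>{d..<2*d}. z i) = (\<Sum>i<d. z (i + d))"
    using sum.shift_bounds_nat_ivl[of z 0 d d] by (simp add: lessThan_atLeast0 mult_2)
  also have "\<dots> = (\<Sum>i<d. omega n ^ (c * kk i))" by (simp add: z_def)
  also have "\<dots> = (\<Sum>j\<in>K. omega n ^ (c * j))"
    using sum.reindex_bij_betw[OF kkb, of "\<lambda>j. omega n ^ (c * j)"] by simp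
  finally have s2: "(\<Sum>i\<in>{d..<2*d}. z i) = (\<Sum>j\<in>K. omega n ^ (c * j))" .
  have inV: "in_V d z" unfolding in_V_def using s1 s2 eqs by simp
  have noperm: "\<not> (\<exists>\<pi>. \<pi> permutes {..<d} \<and> (\<forall>i<d. z (d + i) = z (\<pi> i)))"
  proof
    assume "\<exists>\<pi>. \<pi> permutes {..<d} \<and> (\<forall>i<d. z (d + i) = z (\<pi> i))"
    then obtain \<pi> where pp: "\<pi> permutes {..<d}" and pz: "\<forall>i<d. z (d + i) = z (\<pi> i)" by blast
    have pim: "\<pi> ` {..<d} = {..<d}" using pp by (simp add: permutes_image)
    have pin: "\<And>i. i < d \<Longrightarrow> \<pi> i < d" using pp
      by (metis lessThan_iff permutes_in_image)
    have meq: "\<And>i. i < d \<Longrightarrow> (c * kk i) mod n = m (\<pi> i)"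
    proof -
      fix i assume i: "i < d"
      have "omega n ^ (c * kk i) = omega n ^ m (\<pi> i)"
        using pz i pin[OF i] by (simp add: z_def)
      hence "(c * kk i) mod n = m (\<pi> i) mod n" using omega_pow_eq[OF n] by blast
      moreover have "m (\<pi> i) \<in> J" using mb pin[OF i] by (auto simp: bij_betw_def)
      ultimately show "(c * kk i) mod n = m (\<pi> i)" using JS by auto
    qed
    have "J = m ` {..<d}" using mb by (simp add: bij_betw_def)
    also have "\<dots> = m ` \<pi> ` {..<d}" using pim by simp
    also have "\<dots> = (\<lambda>i. (c * kk i) mod n) ` {..<d}" using meq by (auto simp: image_iff)
    also have "\<dots> = (\<lambda>k. (c * k) mod n) ` (kk ` {..<d})" by (simp add: image_image)
    also have "\<dots> = (\<lambda>k. (c * k) mod n) ` K" using kkb by (simp add: bij_betw_def)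
    finally have JK: "J = (\<lambda>k. (c * k) mod n) ` K" .
    obtain cf where cf: "(\<Sum>j\<in>J. cf j * j) mod n = 1 mod n"
      using assms(3) n unfolding generates_Zn_def by (meson mod_less_divisor)
    define g where "g j = (SOME k. k \<in> K \<and> j = (c * k) mod n)" for j
    have gj: "\<And>j. j \<in> J \<Longrightarrow> j = (c * g j) mod n"
    proof -
      fix j assume "j \<in> J"
      hence "\<exists>k. k \<in> K \<and> j = (c * k) mod n" using JK by auto
      thus "j = (c * g j) mod n" unfolding g_def by (metis (mono_tags, lifting) someI_ex)
    qed
    define a where "a = (\<Sum>j\<in>J. cf j * g j) mod n"
    have "(\<Sum>j\<in>J. cf j * j) mod n = (\<Sum>j\<in>J. cf j * ((c * g j) mod n)) mod n"
      using gj by (metis (no_types, lifting) sum.cong)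
    also have "\<dots> = (\<Sum>j\<in>J. (cf j * ((c * g j) mod n)) mod n) mod n"
      by (simp add: mod_sum_eq)
    also have "\<dots> = (\<Sum>j\<in>J. (cf j * g j * c) mod n) mod n"
      by (simp add: mod_mult_right_eq algebra_simps)
    also have "\<dots> = ((\<Sum>j\<in>J. cf j * g j) * c) mod n"
      by (simp add: mod_sum_eq sum_distrib_right)
    also have "\<dots> = (a * c) mod n" unfolding a_def by (simp add: mod_mult_left_eq)
    finally have ac: "(a * c) mod n = 1 mod n" using cf by simp
    have an: "a < n" using n by (simp add: a_def)
    have cop: "coprime a n" using inv_coprime[OF ac] .
    have "(\<lambda>j. (a * j) mod n) ` J = (\<lambda>k. (a * ((c * k) mod n)) mod n) ` K"
      using JK by (simp add: image_image)
    also have "\<dots> = K"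
    proof -
      have "\<And>k. k \<in> K \<Longrightarrow> (a * ((c * k) mod n)) mod n = k"
      proof -
        fix k assume k: "k \<in> K"
        have "(a * ((c * k) mod n)) mod n = ((a * c) * k) mod n"
          by (simp add: mod_mult_right_eq mult.assoc)
        also have "\<dots> = (((a * c) mod n) * k) mod n" by (simp add: mod_mult_left_eq)
        also have "\<dots> = ((1 mod n) * k) mod n" using ac by simp
        also have "\<dots> = k mod n" by (simp add: mod_mult_left_eq)
        also have "\<dots> = k" using k KS by auto
        finally show "(a * ((c * k) mod n)) mod n = k" .
      qed
      thus ?thesis by (simp add: image_cong)
    qed
    finally have "K = (\<lambda>j. (a * j) mod n) ` J" by simp
    hence "mult_equiv n J K" unfolding mult_equiv_def using an cop by blast
    thus False using nme by simp
  qed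
  have ep: "exceptional_point d z"
    unfolding exceptional_point_def using inV noperm z2 n by blast
  show ?thesis using z1 z2 inV ep by blast
qed

end
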